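(* Under the standing setup, let $\pi$ be any policy, $(\Gamma_n)_n$ the RDBP controlled by $\pi$ and $(W_n)_n$ the wf-process, both defined on the same double arrays with $\Gamma_0=W_0=1$. Then $\Gamma_n\le W_n$ almost surely for every $n\ge0$. In particular $q_W\le q_\Gamma$.
   Context: Standing setup. On a probability space $(\Omega,\mathcal F,\mathrm P)$ there are three mutually independent double arrays $(D_n^k)_{n\ge0,k\ge1}$, $(X_n^k)_{n\ge0,k\ge1}$, $(R_n^k)_{n\ge0,k\ge1}$, each consisting of i.i.d. random variables: $D_n^k\in\{0,1,2,\dots\}$ with law $p_j=\mathrm P[D_n^k=j]$ and mean $m$; $X_n^k\ge0$ real-valued with continuous distribution function $F$ and mean $\mu$; $R_n^k\ge0$ real-valued with mean $r$. Standing assumptions: (A1) $1<m<\infty$, $r<\infty$, $0<\mu<\infty$; (A2) $p_0>0$ and $p_k>0$ for some $k\ge2$; (A3) for the process under consideration started at $1$, every finite positive state is reached with positive probability; (A4) $D_n^k,X_n^k,R_n^k$ have finite variances. Write $D_n(k)=\sum_{j=1}^kD_n^j$, $R_n(k)=\sum_{j=1}^kR_n^j$. A policy is a sequence $\pi=(\pi_t)_{t\ge1}$ where $\pi_t$ assigns to each $(x_k)_{k=1}^t\in[0,\infty)^t$ a permutation $\sigma=\pi_t((x_k)_{k=1}^t)$ of $\{1,\dots,t\}$. Its counting function is $Q^\pi(0,\varnothing,s)=0$ and, for $t\ge1$, $Q^\pi(t,(x_k)_{k=1}^t,s)=0$ if $x_{\sigma(1)}>s$, otherwise $\max\{1\le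 k\le t:\sum_{j=1}^kx_{\sigma(j)}\le s\}$. The RDBP controlled by $\pi$ started at $L$ is $\Gamma_0=L$, $\Gamma_{n+1}=Q^\pi\big(D_n(\Gamma_n),(X_n^k)_{k=1}^{D_n(\Gamma_n)},R_n(\Gamma_n)\big)$. The weakest-first policy takes $\sigma$ with $x_{\sigma(1)}\le\dots\le x_{\sigma(t)}$; its counting function is denoted $N$ and the corresponding RDBP, the wf-process, is denoted $(W_n)_n$. For a process $(Z_n)$, $q_Z=\mathrm P[\lim_nZ_n=0\mid Z_0=1]$ is its extinction probability. *)

theory Defs
  imports "HOL-Probability.Probability" "HOL-Combinatorics.Permutations"
begin

definition policy :: "(nat \<Rightarrow> (nat \<Rightarrow> real) \<Rightarrow> nat \<Rightarrow> nat) \<Rightarrow> bool" where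
  "policy pol \<longleftrightarrow>
     (\<forall>t\<ge>1. \<forall>x. (\<forall>k\<in>{1..t}. 0 \<le> x k) \<longrightarrow> pol t x permutes {1..t})"

text \<open>Measurability of the policy (needed so that the controlled process is a random variable).\<close>
definition measurable_policy :: "(nat \<Rightarrow> (nat \<Rightarrow> real) \<Rightarrow> nat \<Rightarrow> nat) \<Rightarrow> bool" where
  "measurable_policy pol \<longleftrightarrow>
     (\<forall>t j. (\<lambda>x. pol t x j) \<in> measurable (Pi\<^sub>M UNIV (\<lambda>_. borel)) (count_space UNIV))"

definition wf_policy :: "(nat \<Rightarrow> (nat \<Rightarrow> real) \<Rightarrow> nat \<Rightarrow> nat) \<Rightarrow> bool" where
  "wf_policy pol \<longleftrightarrow> policy pol \<and>
     (\<forall>t\<ge>1. \<forall>x. (\<forall>k\<in>{1..t}. 0 \<le> x k) \<longrightarrow>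
        (\<forall>i j. 1 \<le> i \<and> i \<le> j \<and> j \<le> t \<longrightarrow> x (pol t x i) \<le> x (pol t x j)))"

definition countfun :: "(nat \<Rightarrow> (nat \<Rightarrow> real) \<Rightarrow> nat \<Rightarrow> nat) \<Rightarrow> nat \<Rightarrow> (nat \<Rightarrow> real) \<Rightarrow> real \<Rightarrow> nat" where
  "countfun pol t x s =
     (if t = 0 then 0
      else if x (pol t x 1) > s then 0
      else Max {k \<in> {1..t}. (\<Sum>j=1..k. x (pol t x j)) \<le> s})"

text \<open>The RDBP controlled by pol started at L, built on the arrays D, X, R
  (array entries are indexed by n \<ge> 0 and k \<ge> 1; entries with k = 0 are unused).\<close>
primrec rdbp :: "(nat \<Rightarrow> (nat \<Rightarrow> real) \<Rightarrow> nat \<Rightarrow> nat) \<Rightarrow> (nat \<Rightarrow> nat \<Rightarrow> 'a \<Rightarrow> nat) \<Rightarrow>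
    (nat \<Rightarrow> nat \<Rightarrow> 'a \<Rightarrow> real) \<Rightarrow> (nat \<Rightarrow> nat \<Rightarrow> 'a \<Rightarrow> real) \<Rightarrow> nat \<Rightarrow> nat \<Rightarrow> 'a \<Rightarrow> nat" where
  "rdbp pol D X R L 0 \<omega> = L"
| "rdbp pol D X R L (Suc n) \<omega> =
     (let g = rdbp pol D X R L n \<omega>;
          t = (\<Sum>k=1..g. D n k \<omega>)
      in countfun pol t (\<lambda>k. if k \<in> {1..t} then X n k \<omega> else 0) (\<Sum>k=1..g. R n k \<omega>))"

datatype arr = ArrD | ArrX | ArrR

definition all_entries :: "(nat \<Rightarrow> nat \<Rightarrow> 'a \<Rightarrow> nat) \<Rightarrow> (nat \<Rightarrow> nat \<Rightarrow> 'a \<Rightarrow> real) \<Rightarrow>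
    (nat \<Rightarrow> nat \<Rightarrow> 'a \<Rightarrow> real) \<Rightarrow> arr \<times> nat \<times> nat \<Rightarrow> 'a \<Rightarrow> real" where
  "all_entries D X R = (\<lambda>(a, n, k) \<omega>. case a of ArrD \<Rightarrow> real (D n k \<omega>) | ArrX \<Rightarrow> X n k \<omega> | ArrR \<Rightarrow> R n k \<omega>)"

definition ext_prob :: "'a measure \<Rightarrow> (nat \<Rightarrow> 'a \<Rightarrow> nat) \<Rightarrow> real" where
  "ext_prob M Z = measure M {\<omega> \<in> space M. (\<lambda>n. real (Z n \<omega>)) \<longlonglongrightarrow> 0}"

end

theory Submission
  imports Defs
begin

lemma cf_eq:
  "countfun pol t x s = v \<longleftrightarrow>
    ((t = 0 \<and> v = 0) \<or> (t \<noteq> 0 \<and> x (pol t x 1) > s \<and> v = 0) \<or>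
     (t \<noteq> 0 \<and> \<not> x (pol t x 1) > s \<and> (\<Sum>j=1..v. x (pol t x j)) \<le> s \<and> v \<in> {1..t} \<and>
       (\<forall>k\<in>{1..t}. (\<Sum>j=1..k. x (pol t x j)) \<le> s \<longrightarrow> k \<le> v)))"
proof (cases "t = 0 \<or> x (pol t x 1) > s")
  case True
  then have "countfun pol t x s = 0" by (auto simp: countfun_def)
  then show ?thesis using True by auto
next
  case False
  have t0: "t \<noteq> 0" using False by (simp only: de_Morgan_disj simp_thms)
  have c1: "\<not> x (pol t x 1) > s" using False by (simp only: de_Morgan_disj simp_thms)
  let ?S = "{k \<in> {1..t}. (\<Sum>j=1..k. x (pol t x j)) \<le> s}"
  have ne: "1 \<in> ?S" using False by auto
  have fin: "finite ?S" by auto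
  have cf: "countfun pol t x s = Max ?S" using False by (simp add: countfun_def)
  have mi: "Max ?S \<in> ?S" using Max_in[OF fin] ne by blast
  show ?thesis
  proof
    assume "countfun pol t x s = v"
    then have v: "v = Max ?S" using cf by simp
    have "(\<Sum>j=1..v. x (pol t x j)) \<le> s" "v \<in> {1..t}" using mi v by auto
    moreover have "\<forall>k\<in>{1..t}. (\<Sum>j=1..k. x (pol t x j)) \<le> s \<longrightarrow> k \<le> v"
      using Max_ge[OF fin] v by blast
    ultimately show "((t = 0 \<and> v = 0) \<or> (t \<noteq> 0 \<and> x (pol t x 1) > s \<and> v = 0) \<or>
     (t \<noteq> 0 \<and> \<not> x (pol t x 1) > s \<and> (\<Sum>j=1..v. x (pol t x j)) \<le> s \<and> v \<in> {1..t} \<and>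
       (\<forall>k\<in>{1..t}. (\<Sum>j=1..k. x (pol t x j)) \<le> s \<longrightarrow> k \<le> v)))"
      using t0 c1 by (intro disjI2 conjI)
  next
    assume "((t = 0 \<and> v = 0) \<or> (t \<noteq> 0 \<and> x (pol t x 1) > s \<and> v = 0) \<or>
     (t \<noteq> 0 \<and> \<not> x (pol t x 1) > s \<and> (\<Sum>j=1..v. x (pol t x j)) \<le> s \<and> v \<in> {1..t} \<and>
       (\<forall>k\<in>{1..t}. (\<Sum>j=1..k. x (pol t x j)) \<le> s \<longrightarrow> k \<le> v)))"
    then have hh: "(\<Sum>j=1..v. x (pol t x j)) \<le> s \<and> v \<in> {1..t} \<and>
       (\<forall>k\<in>{1..t}. (\<Sum>j=1..k. x (pol t x j)) \<le> s \<longrightarrow> k \<le> v)" using t0 c1 by auto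
    note h = conjunct1[OF hh] conjunct1[OF conjunct2[OF hh]] conjunct2[OF conjunct2[OF hh]]
    have "Max ?S = v" using h by (intro Max_eqI fin) simp_all
    then show "countfun pol t x s = v" using cf by simp
  qed
qed

lemma countfun_meas:
  assumes mp: "measurable_policy pol"
    and xm: "xv \<in> measurable M (Pi\<^sub>M UNIV (\<lambda>_. borel))" and sm: "s \<in> borel_measurable M"
  shows "(\<lambda>\<omega>. countfun pol t (xv \<omega>) (s \<omega>)) \<in> measurable M (count_space UNIV)"
proof -
  have pm: "(\<lambda>\<omega>. pol t (xv \<omega>) j) \<in> M \<rightarrow>\<^sub>M count_space UNIV" for j
  proof -
    have "(\<lambda>x. pol t x j) \<in> Pi\<^sub>M UNIV (\<lambda>_. borel) \<rightarrow>\<^sub>M count_space UNIV"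
      using mp unfolding measurable_policy_def by blast
    from measurable_compose[OF xm this] show ?thesis by (simp add: o_def)
  qed
  have comp: "\<And>i. (\<lambda>\<omega>. xv \<omega> i) \<in> borel_measurable M"
    using measurable_compose[OF xm measurable_component_singleton[of _ UNIV]] by auto
  have cm: "\<And>j. (\<lambda>\<omega>. xv \<omega> (pol t (xv \<omega>) j)) \<in> borel_measurable M"
    by (rule measurable_compose_countable[where f="\<lambda>i \<omega>. xv \<omega> i", OF comp pm])
  have Pm[measurable]: "Measurable.pred M (\<lambda>\<omega>. (\<Sum>j=1..k. xv \<omega> (pol t (xv \<omega>) j)) \<le> s \<omega>)" for k
  proof -
    have "(\<lambda>\<omega>. \<Sum>j=1..k. xv \<omega> (pol t (xv \<omega>) j)) \<in> borel_measurable M"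
      using cm by (intro borel_measurable_sum) auto
    from borel_measurable_le[OF this sm] show ?thesis by (subst Measurable.pred_def)
  qed
  have Cm[measurable]: "Measurable.pred M (\<lambda>\<omega>. xv \<omega> (pol t (xv \<omega>) 1) > s \<omega>)"
    using borel_measurable_less[OF sm cm] by (subst Measurable.pred_def)
  show ?thesis unfolding measurable_count_space_eq2_countable
  proof (intro conjI ballI)
    fix v :: nat
    have eq: "(\<lambda>\<omega>. countfun pol t (xv \<omega>) (s \<omega>)) -` {v} \<inter> space M =
      {\<omega> \<in> space M. (t = 0 \<and> v = 0) \<or> (t \<noteq> 0 \<and> xv \<omega> (pol t (xv \<omega>) 1) > s \<omega> \<and> v = 0) \<or>
     (t \<noteq> 0 \<and> \<not> xv \<omega> (pol t (xv \<omega>) 1) > s \<omega> \<and> (\<Sum>j=1..v. xv \<omega> (pol t (xv \<omega>) j)) \<le> s \<omega> \<and> v \<in> {1..t} \<and>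
       (\<forall>k\<in>{1..t}. (\<Sum>j=1..k. xv \<omega> (pol t (xv \<omega>) j)) \<le> s \<omega> \<longrightarrow> k \<le> v))}"
      by (rule set_eqI) (simp only: vimage_def Int_iff mem_Collect_eq cf_eq singleton_iff conj_commute)
    show "(\<lambda>\<omega>. countfun pol t (xv \<omega>) (s \<omega>)) -` {v} \<inter> space M \<in> sets M"
      unfolding eq by measurable
  qed auto
qed

lemma sorted_min_sum:
  fixes y :: "nat \<Rightarrow> real"
  assumes mono: "\<And>i j. 1 \<le> i \<Longrightarrow> i \<le> j \<Longrightarrow> j \<le> n \<Longrightarrow> y i \<le> y j"
    and S: "S \<subseteq> {1..n}" "card S = k"
  shows "(\<Sum>j=1..k. y j) \<le> sum y S"
proof (cases "k = 0")
  case True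
  then show ?thesis using S by (simp add: card_eq_0_iff finite_subset)
next
  case False
  have finS: "finite S" using S(1) finite_subset by blast
  have kn: "k \<le> n" using card_mono[OF _ S(1)] S(2) by simp
  let ?K = "{1..k}"
  have e1: "sum y S = sum y (S \<inter> ?K) + sum y (S - ?K)" by (rule sum.Int_Diff[OF finS])
  have e2: "sum y ?K = sum y (?K \<inter> S) + sum y (?K - S)" by (rule sum.Int_Diff) simp
  have c1: "card S = card (S \<inter> ?K) + card (S - ?K)"
    using card_Int_Diff[OF finS] by blast
  have c2: "card ?K = card (?K \<inter> S) + card (?K - S)"
    using card_Int_Diff[of ?K S] by simp
  have cc: "card (S - ?K) = card (?K - S)" using c1 c2 S(2) by (simp add: Int_commute)
  have b1: "sum y (?K - S) \<le> of_nat (card (?K - S)) * y k"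
    by (rule sum_bounded_above) (use kn mono in auto)
  have b2: "of_nat (card (S - ?K)) * y k \<le> sum y (S - ?K)"
    by (rule sum_bounded_below) (use S(1) False mono in auto)
  show ?thesis using e1 e2 b1 b2 cc by (simp add: Int_commute)
qed

lemma prefix_min:
  fixes x :: "nat \<Rightarrow> real"
  assumes p: "p permutes {1..n}"
    and mono: "\<And>i j. 1 \<le> i \<Longrightarrow> i \<le> j \<Longrightarrow> j \<le> n \<Longrightarrow> x (p i) \<le> x (p j)"
    and inj: "inj_on f {1..k}" and rng: "f ` {1..k} \<subseteq> {1..n}"
  shows "(\<Sum>j=1..k. x (p j)) \<le> (\<Sum>j=1..k. x (f j))"
proof -
  define q where "q = inv p"
  have q: "q permutes {1..n}" unfolding q_def by (rule permutes_inv[OF p])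
  have injq: "inj q" using q permutes_inj by blast
  have injqf: "inj_on (q \<circ> f) {1..k}" using inj injq by (simp add: comp_inj_on inj_on_subset)
  have Ssub: "(q \<circ> f) ` {1..k} \<subseteq> {1..n}"
    using rng permutes_image[OF q] by (auto simp: image_comp[symmetric])
  have card: "card ((q \<circ> f) ` {1..k}) = k" using card_image[OF injqf] by simp
  have "(\<Sum>j=1..k. x (p j)) \<le> sum (\<lambda>i. x (p i)) ((q \<circ> f) ` {1..k})"
    by (rule sorted_min_sum[OF _ Ssub card]) (rule mono)
  also have "\<dots> = (\<Sum>j=1..k. x (p (q (f j))))"
    by (subst sum.reindex[OF injqf]) simp
  also have "\<dots> = (\<Sum>j=1..k. x (f j))"
    unfolding q_def using permutes_inverses(1)[OF p] by simp
  finally show ?thesis .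
qed

lemma countfun_le:
  assumes pol: "policy pol" and wf: "wf_policy pw" and tt: "t \<le> t'"
    and xx: "\<And>k. k \<in> {1..t} \<Longrightarrow> x k = x' k"
    and nn: "\<And>k. k \<in> {1..t'} \<Longrightarrow> 0 \<le> x' k" and ss: "s \<le> s'"
  shows "countfun pol t x s \<le> countfun pw t' x' s'"
proof (cases "countfun pol t x s = 0")
  case True then show ?thesis by simp
next
  case False
  let ?K = "countfun pol t x s"
  have tc: "\<not> (t = 0 \<or> x (pol t x 1) > s)"
  proof
    assume "t = 0 \<or> x (pol t x 1) > s"
    then have "?K = 0" by (auto simp: countfun_def)
    with False show False by simp
  qed
  have t0: "t \<noteq> 0" using tc by (simp only: de_Morgan_disj simp_thms)
  have c1: "\<not> x (pol t x 1) > s" using tc by (simp only: de_Morgan_disj simp_thms)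
  let ?S = "{k \<in> {1..t}. (\<Sum>j=1..k. x (pol t x j)) \<le> s}"
  have ne: "1 \<in> ?S" using t0 c1 by auto
  have fin: "finite ?S" by auto
  have cf: "?K = Max ?S" using t0 c1 by (simp add: countfun_def)
  have mi: "Max ?S \<in> ?S" using Max_in[OF fin] ne by blast
  hence K: "?K \<in> {1..t}" "(\<Sum>j=1..?K. x (pol t x j)) \<le> s" using cf by auto
  have xnn: "\<forall>k\<in>{1..t}. 0 \<le> x k" using xx nn tt by fastforce
  have sig: "pol t x permutes {1..t}" using pol t0 xnn unfolding policy_def by auto
  have t'1: "t' \<ge> 1" using t0 tt by auto
  have pw: "pw t' x' permutes {1..t'}" using wf t'1 nn unfolding wf_policy_def policy_def by auto
  have mono: "\<And>i j. 1 \<le> i \<Longrightarrow> i \<le> j \<Longrightarrow> j \<le> t' \<Longrightarrow> x' (pw t' x' i) \<le> x' (pw t' x' j)"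
    using wf t'1 nn unfolding wf_policy_def by auto
  have injs: "inj_on (pol t x) {1..?K}" using permutes_inj[OF sig] inj_on_subset by blast
  have rngs: "pol t x ` {1..?K} \<subseteq> {1..t'}"
  proof
    fix z assume "z \<in> pol t x ` {1..?K}"
    then obtain j where j: "j \<in> {1..?K}" "z = pol t x j" by blast
    then have "j \<in> {1..t}" using K(1) by auto
    then have "z \<in> {1..t}" using permutes_in_image[OF sig] j(2) by blast
    then show "z \<in> {1..t'}" using tt by auto
  qed
  have "(\<Sum>j=1..?K. x' (pw t' x' j)) \<le> (\<Sum>j=1..?K. x' (pol t x j))"
    by (rule prefix_min[where x=x' and p="pw t' x'", OF pw mono injs rngs])
  also have "\<dots> = (\<Sum>j=1..?K. x (pol t x j))"
  proof (rule sum.cong[OF refl])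
    fix j assume "j \<in> {1..?K}"
    then have "j \<in> {1..t}" using K(1) by auto
    then have "pol t x j \<in> {1..t}" using permutes_in_image[OF sig] by blast
    then show "x' (pol t x j) = x (pol t x j)" using xx by simp
  qed
  finally have pre: "(\<Sum>j=1..?K. x' (pw t' x' j)) \<le> s'" using K(2) ss by linarith
  have pin: "\<And>j. j \<in> {1..t'} \<Longrightarrow> pw t' x' j \<in> {1..t'}" using permutes_in_image[OF pw] by blast
  have "x' (pw t' x' 1) \<le> (\<Sum>j=1..?K. x' (pw t' x' j))"
    by (rule member_le_sum) (use K(1) tt pin nn in auto)
  hence c1': "\<not> x' (pw t' x' 1) > s'" using pre by linarith
  let ?S' = "{k \<in> {1..t'}. (\<Sum>j=1..k. x' (pw t' x' j)) \<le> s'}"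
  have "?K \<in> ?S'" using K(1) tt pre by auto
  hence "?K \<le> Max ?S'" by (intro Max_ge) auto
  moreover have "countfun pw t' x' s' = Max ?S'" using t'1 c1' by (simp add: countfun_def)
  ultimately show ?thesis by simp
qed

theorem mainTheorem4:
  fixes M :: "'a measure"
    and D :: "nat \<Rightarrow> nat \<Rightarrow> 'a \<Rightarrow> nat"
    and X R :: "nat \<Rightarrow> nat \<Rightarrow> 'a \<Rightarrow> real"
    and pol pw :: "nat \<Rightarrow> (nat \<Rightarrow> real) \<Rightarrow> nat \<Rightarrow> nat"
  assumes P: "prob_space M"
    and D_meas: "\<And>n k. D n k \<in> measurable M (count_space UNIV)"
    and X_meas: "\<And>n k. X n k \<in> borel_measurable M"
    and R_meas: "\<And>n k. R n k \<in> borel_measurable M"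
    and indep: "prob_space.indep_vars M (\<lambda>_. borel) (all_entries D X R)
                  {(a, n, k). k \<ge> 1}"
    and D_ident: "\<And>n k. k \<ge> 1 \<Longrightarrow>
                  distr M (count_space UNIV) (D n k) = distr M (count_space UNIV) (D 0 1)"
    and X_ident: "\<And>n k. k \<ge> 1 \<Longrightarrow> distr M borel (X n k) = distr M borel (X 0 1)"
    and R_ident: "\<And>n k. k \<ge> 1 \<Longrightarrow> distr M borel (R n k) = distr M borel (R 0 1)"
    and X_nonneg: "\<And>n k \<omega>. \<omega> \<in> space M \<Longrightarrow> 0 \<le> X n k \<omega>"
    and R_nonneg: "\<And>n k \<omega>. \<omega> \<in> space M \<Longrightarrow> 0 \<le> R n k \<omega>"
    and F_cont: "\<And>x. isCont (cdf (distr M borel (X 0 1))) x"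
    and A1_m: "integrable M (\<lambda>\<omega>. real (D 0 1 \<omega>))" "1 < (\<integral>\<omega>. real (D 0 1 \<omega>) \<partial>M)"
    and A1_r: "integrable M (R 0 1)"
    and A1_mu: "integrable M (X 0 1)" "0 < (\<integral>\<omega>. X 0 1 \<omega> \<partial>M)"
    and A2: "0 < measure M {\<omega> \<in> space M. D 0 1 \<omega> = 0}"
            "\<exists>j\<ge>2. 0 < measure M {\<omega> \<in> space M. D 0 1 \<omega> = j}"
    and A3: "\<And>j. j \<ge> 1 \<Longrightarrow> \<exists>n. 0 < measure M {\<omega> \<in> space M. rdbp pw D X R 1 n \<omega> = j}"
    and A4: "integrable M (\<lambda>\<omega>. (real (D 0 1 \<omega>))\<^sup>2)"
            "integrable M (\<lambda>\<omega>. (X 0 1 \<omega>)\<^sup>2)"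
            "integrable M (\<lambda>\<omega>. (R 0 1 \<omega>)\<^sup>2)"
    and pi_pol: "policy pol" "measurable_policy pol"
    and pw_pol: "wf_policy pw" "measurable_policy pw"
  shows "(\<forall>n. AE \<omega> in M. rdbp pol D X R 1 n \<omega> \<le> rdbp pw D X R 1 n \<omega>)
         \<and> ext_prob M (rdbp pw D X R 1) \<le> ext_prob M (rdbp pol D X R 1)"
proof -
  interpret prob_space M by (rule P)
  let ?G = "rdbp pol D X R 1" and ?W = "rdbp pw D X R 1"
  have pw_policy: "policy pw" using pw_pol(1) unfolding wf_policy_def by blast
  have le: "?G n \<omega> \<le> ?W n \<omega>" if om: "\<omega> \<in> space M" for n \<omega>
  proof (induction n)
    case 0 then show ?case by simp
  next
    case (Suc n)
    define t where "t = (\<Sum>k=1..?G n \<omega>. D n k \<omega>)"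
    define t' where "t' = (\<Sum>k=1..?W n \<omega>. D n k \<omega>)"
    have tt: "t \<le> t'" unfolding t_def t'_def using Suc.IH by (intro sum_mono2) auto
    have ss: "(\<Sum>k=1..?G n \<omega>. R n k \<omega>) \<le> (\<Sum>k=1..?W n \<omega>. R n k \<omega>)"
      using Suc.IH R_nonneg[OF om] by (intro sum_mono2) auto
    have "countfun pol t (\<lambda>k. if k \<in> {1..t} then X n k \<omega> else 0) (\<Sum>k=1..?G n \<omega>. R n k \<omega>)
       \<le> countfun pw t' (\<lambda>k. if k \<in> {1..t'} then X n k \<omega> else 0) (\<Sum>k=1..?W n \<omega>. R n k \<omega>)"
      by (rule countfun_le[OF pi_pol(1) pw_pol(1) tt _ _ ss]) (use tt X_nonneg[OF om] in auto)
    then show ?case by (simp add: Let_def t_def t'_def)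
  qed
  have meas: "rdbp p D X R 1 n \<in> measurable M (count_space UNIV)" if mp: "measurable_policy p" for p n
  proof (induction n)
    case 0 then show ?case by simp
  next
    case (Suc n)
    have fx: "(\<lambda>\<omega>. countfun p t (\<lambda>k. if k \<in> {1..t} then X n k \<omega> else 0) (\<Sum>k=1..g. R n k \<omega>))
       \<in> measurable M (count_space UNIV)" for g t
    proof (rule countfun_meas[OF mp])
      show "(\<lambda>\<omega> k. if k \<in> {1..t} then X n k \<omega> else 0) \<in> M \<rightarrow>\<^sub>M Pi\<^sub>M UNIV (\<lambda>_. borel)"
        proof (rule measurable_PiM_single')
        fix k show "(\<lambda>\<omega>. if k \<in> {1..t} then X n k \<omega> else 0) \<in> borel_measurable M"
        proof (cases "k \<in> {1..t}")
          case True
          then have "(\<lambda>\<omega>. if k \<in> {1..t} then X n k \<omega> else 0) = X n k" by (intro ext) (simp only: if_True)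
          then show ?thesis using X_meas by simp
        next
          case False
          then have "(\<lambda>\<omega>. if k \<in> {1..t} then X n k \<omega> else 0) = (\<lambda>_. 0)" by (intro ext) (simp only: if_False)
          then show ?thesis by simp
        qed
      qed auto
      show "(\<lambda>\<omega>. \<Sum>k=1..g. R n k \<omega>) \<in> borel_measurable M"
        using R_meas by (intro borel_measurable_sum) auto
    qed
    have fg: "(\<lambda>\<omega>. countfun p (\<Sum>k=1..g. D n k \<omega>)
        (\<lambda>k. if k \<in> {1..(\<Sum>k=1..g. D n k \<omega>)} then X n k \<omega> else 0) (\<Sum>k=1..g. R n k \<omega>))
       \<in> measurable M (count_space UNIV)" for g
      by (rule measurable_compose_countable[where f="\<lambda>t \<omega>. countfun p t (\<lambda>k. if k \<in> {1..t} then X n k \<omega> else 0) (\<Sum>k=1..g. R n k \<omega>)", OF fx])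
         (use D_meas in \<open>intro measurable_sum_nat\<close>)
    have "(\<lambda>\<omega>. (\<lambda>g \<omega>. countfun p (\<Sum>k=1..g. D n k \<omega>)
        (\<lambda>k. if k \<in> {1..(\<Sum>k=1..g. D n k \<omega>)} then X n k \<omega> else 0) (\<Sum>k=1..g. R n k \<omega>)) (rdbp p D X R 1 n \<omega>) \<omega>)
       \<in> measurable M (count_space UNIV)"
      by (rule measurable_compose_countable[OF fg Suc.IH])
    then show ?case by (simp add: Let_def)
  qed
  have conv: "((\<lambda>n. real (Z n)) \<longlonglongrightarrow> 0) \<longleftrightarrow> (\<exists>N. \<forall>n\<ge>N. Z n = 0)" for Z :: "nat \<Rightarrow> nat"
  proof
    assume "(\<lambda>n. real (Z n)) \<longlonglongrightarrow> 0"
    then have "eventually (\<lambda>n. dist (real (Z n)) 0 < 1/2) sequentially"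
      by (rule tendstoD) simp
    then obtain N where N: "\<forall>n\<ge>N. real (Z n) < 1/2" by (auto simp: eventually_sequentially)
    have "\<forall>n\<ge>N. Z n = 0"
    proof (intro allI impI)
      fix n assume "n \<ge> N"
      then have "real (Z n) < 1/2" using N by blast
      then show "Z n = 0" by linarith
    qed
    then show "\<exists>N. \<forall>n\<ge>N. Z n = 0" by (rule exI)
  next
    assume "\<exists>N. \<forall>n\<ge>N. Z n = 0"
    then have "eventually (\<lambda>n. real (Z n) = 0) sequentially" by (auto simp: eventually_sequentially)
    then show "(\<lambda>n. real (Z n)) \<longlonglongrightarrow> 0" by (rule tendsto_eventually)
  qed
  have setG: "{\<omega> \<in> space M. (\<lambda>n. real (?G n \<omega>)) \<longlonglongrightarrow> 0} = {\<omega> \<in> space M. \<exists>N. \<forall>n\<ge>N. ?G n \<omega> = 0}"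
  proof (rule Collect_cong)
    fix \<omega>
    show "(\<omega> \<in> space M \<and> (\<lambda>n. real (?G n \<omega>)) \<longlonglongrightarrow> 0) = (\<omega> \<in> space M \<and> (\<exists>N. \<forall>n\<ge>N. ?G n \<omega> = 0))"
      by (simp only: conv[of "\<lambda>n. ?G n \<omega>"])
  qed
  have Gm: "\<And>n. ?G n \<in> measurable M (count_space UNIV)" using meas pi_pol(2) by blast
  have Gpre: "{\<omega>\<in>space M. ?G n \<omega> = 0} \<in> sets M" for n
  proof -
    have "{\<omega>\<in>space M. ?G n \<omega> = 0} = ?G n -` {0} \<inter> space M" by blast
    then show ?thesis using measurable_sets[OF Gm[of n], of "{0}"] by simp
  qed
  have Gsets: "{\<omega> \<in> space M. (\<lambda>n. real (?G n \<omega>)) \<longlonglongrightarrow> 0} \<in> sets M"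
  proof -
    have e: "{\<omega> \<in> space M. \<exists>N. \<forall>n\<ge>N. ?G n \<omega> = 0} = (\<Union>N. \<Inter>n\<in>{N..}. {\<omega>\<in>space M. ?G n \<omega> = 0})"
      by blast
    have "(\<Union>N. \<Inter>n\<in>{N..}. {\<omega>\<in>space M. ?G n \<omega> = 0}) \<in> sets M"
      using Gpre by (intro sets.countable_UN sets.countable_INT) auto
    then show ?thesis unfolding setG e .
  qed
  have sub: "{\<omega> \<in> space M. (\<lambda>n. real (?W n \<omega>)) \<longlonglongrightarrow> 0} \<subseteq> {\<omega> \<in> space M. (\<lambda>n. real (?G n \<omega>)) \<longlonglongrightarrow> 0}"
  proof safe
    fix \<omega> assume om: "\<omega> \<in> space M" and w: "(\<lambda>n. real (?W n \<omega>)) \<longlonglongrightarrow> 0"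
    show "(\<lambda>n. real (?G n \<omega>)) \<longlonglongrightarrow> 0"
      by (rule real_tendsto_sandwich[of "\<lambda>_. 0" _ _ "\<lambda>n. real (?W n \<omega>)"])
         (use le[OF om] w in auto)
  qed
  have ext: "ext_prob M ?W \<le> ext_prob M ?G"
  proof (cases "{\<omega> \<in> space M. (\<lambda>n. real (?W n \<omega>)) \<longlonglongrightarrow> 0} \<in> sets M")
    case True
    show ?thesis unfolding ext_prob_def by (rule finite_measure_mono[OF sub Gsets])
  next
    case False
    then show ?thesis unfolding ext_prob_def by (simp add: measure_notin_sets)
  qed
  show ?thesis using ext le by (auto intro: AE_I2)
qed

end
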